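(* There is an absolute constant $c>0$ such that for every $\delta'\in(0,1)$, with probability at least $1-4\delta'$ over the draw of $\mathcal D$, any SBEED output $(\hat V,\hat\pi)$ satisfies $$\|\hat V-\mathcal C^{\hat\pi}_\lambda\hat V\|_{2,\mu}\le c\left(\sqrt{\frac{\jmath}{n}}+\sqrt{\epsilon_{\mathcal V,\mathcal P}}+\sqrt[4]{\frac{\jmath}{n}\epsilon_{\mathcal V,\mathcal P}}+\sqrt{\epsilon_{\mathcal G,\mathcal V,\mathcal P}}+\sqrt[4]{\frac{\iota}{n}\epsilon_{\mathcal G,\mathcal V,\mathcal P}}+\sqrt{\frac{\iota}{n}}\right),$$ where $\iota=V_{\lambda,\max}^2\ln\frac{|\mathcal V||\mathcal P||\mathcal G|}{\delta'}$ and $\jmath=V_{\lambda,\max}^2\ln\frac{|\mathcal V||\mathcal P|}{\delta'}$.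
   Context: Finite MDP with state space $\mathcal S$, action space $\mathcal A$, discount $\gamma\in[0,1)$, kernel $P$, reward $R:\mathcal S\times\mathcal A\to[0,R_{\max}]$; $\lambda>0$. $(\mathbb PV)(s,a)=\sum_{s'}P(s'\mid s,a)V(s')$; $(\mathcal C^\pi_\lambda V)(s,a)=R(s,a)+\gamma(\mathbb PV)(s,a)-\lambda\ln\pi(a\mid s)$. $\mu\in\Delta(\mathcal S\times\mathcal A)$, $\|f\|^2_{2,\mu}=\mathbb E_{\mu}[f(s,a)^2]$ (for $V$ depending only on $s$, $V-\mathcal C^\pi_\lambda V$ is $(s,a)\mapsto V(s)-(\mathcal C^\pi_\lambda V)(s,a)$). $V_{\lambda,\max}=(R_{\max}+\lambda\ln|\mathcal A|)/(1-\gamma)$. Finite classes $\mathcal V\subset[0,V_{\lambda,\max}]^{\mathcal S}$, $\mathcal P\subset\{\pi:\|\ln\pi\|_\infty\le V_{\lambda,\max}/\lambda\}$, $\mathcal G\subset[0,2V_{\lambda,\max}]^{\mathcal S\times\mathcal A}$. Dataset $\mathcal D=\{(s_i,a_i,r_i,s_i')\}_{i=1}^n$ with $(s_i,a_i)$ i.i.d. from $\mu$, $r_i=R(s_i,a_i)$, $s_i'\sim P(\cdot\mid s_i,a_i)$ independently. $\mathscr L_{\mathcal D}(V;V,\pi)=\frac1n\sum_i\big(V(s_i)-r_i-\gamma V(s_i')+\lambda\ln\pi(a_i\mid s_i)\big)^2$, $\mathscr R_{\mathcal D}(g;V,\pi)=\frac1n\sum_i\big(g(s_i,a_i)-r_i-\gamma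 V(s_i')+\lambda\ln\pi(a_i\mid s_i)\big)^2$. SBEED output: $(\hat V,\hat\pi)\in\arg\min_{V\in\mathcal V,\pi\in\mathcal P}\max_{g\in\mathcal G}\big[\mathscr L_{\mathcal D}(V;V,\pi)-\mathscr R_{\mathcal D}(g;V,\pi)\big]$. $\epsilon_{\mathcal V,\mathcal P}=\min_{V\in\mathcal V,\pi\in\mathcal P}\|V-\mathcal C^\pi_\lambda V\|^2_{2,\mu}$, $\epsilon_{\mathcal G,\mathcal V,\mathcal P}=\max_{V\in\mathcal V,\pi\in\mathcal P}\min_{g\in\mathcal G}\|g-\mathcal C^\pi_\lambda V\|^2_{2,\mu}$. *)

theory Defs
  imports "HOL-Probability.Probability"
begin

text \<open>Kernel P s a :: nat pmf, reward R s a, policies pi s :: nat pmf (pi(a|s) = pmf (pi s) a),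
  sampling distribution mu :: (nat * nat) pmf.  A data point is (s, a, s'); the reward is R s a.\<close>

type_synonym policy = "nat \<Rightarrow> nat pmf"

definition Vlmax :: "real \<Rightarrow> real \<Rightarrow> real \<Rightarrow> nat set \<Rightarrow> real" where
  "Vlmax \<gamma> Rmax lam A = (Rmax + lam * ln (real (card A))) / (1 - \<gamma>)"

definition softBellman ::
  "(nat \<Rightarrow> nat \<Rightarrow> real) \<Rightarrow> (nat \<Rightarrow> nat \<Rightarrow> nat pmf) \<Rightarrow> real \<Rightarrow> real
    \<Rightarrow> policy \<Rightarrow> (nat \<Rightarrow> real) \<Rightarrow> nat \<Rightarrow> nat \<Rightarrow> real" where
  "softBellman R P \<gamma> lam \<pi> V s a =
     R s a + \<gamma> * measure_pmf.expectation (P s a) V - lam * ln (pmf (\<pi> s) a)"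

definition norm2mu :: "(nat \<times> nat) pmf \<Rightarrow> (nat \<Rightarrow> nat \<Rightarrow> real) \<Rightarrow> real" where
  "norm2mu \<mu> f = sqrt (measure_pmf.expectation \<mu> (\<lambda>(s, a). (f s a)\<^sup>2))"

definition eps_VP ::
  "(nat \<Rightarrow> nat \<Rightarrow> real) \<Rightarrow> (nat \<Rightarrow> nat \<Rightarrow> nat pmf) \<Rightarrow> real \<Rightarrow> real \<Rightarrow> (nat \<times> nat) pmf
    \<Rightarrow> (nat \<Rightarrow> real) set \<Rightarrow> policy set \<Rightarrow> real" where
  "eps_VP R P \<gamma> lam \<mu> VV PP =
     Min ((\<lambda>(V, \<pi>). (norm2mu \<mu> (\<lambda>s a. V s - softBellman R P \<gamma> lam \<pi> V s a))\<^sup>2) ` (VV \<times> PP))"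

definition eps_GVP ::
  "(nat \<Rightarrow> nat \<Rightarrow> real) \<Rightarrow> (nat \<Rightarrow> nat \<Rightarrow> nat pmf) \<Rightarrow> real \<Rightarrow> real \<Rightarrow> (nat \<times> nat) pmf
    \<Rightarrow> (nat \<Rightarrow> nat \<Rightarrow> real) set \<Rightarrow> (nat \<Rightarrow> real) set \<Rightarrow> policy set \<Rightarrow> real" where
  "eps_GVP R P \<gamma> lam \<mu> GG VV PP =
     Max ((\<lambda>(V, \<pi>). Min ((\<lambda>g. (norm2mu \<mu> (\<lambda>s a. g s a - softBellman R P \<gamma> lam \<pi> V s a))\<^sup>2) ` GG))
          ` (VV \<times> PP))"

definition lossL ::
  "(nat \<Rightarrow> nat \<Rightarrow> real) \<Rightarrow> real \<Rightarrow> real \<Rightarrow> nat \<Rightarrow> (nat \<Rightarrow> nat \<times> nat \<times> nat)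
    \<Rightarrow> (nat \<Rightarrow> real) \<Rightarrow> policy \<Rightarrow> real" where
  "lossL R \<gamma> lam n D V \<pi> =
     (1 / real n) * (\<Sum>i<n. case D i of (s, a, s') \<Rightarrow>
        (V s - R s a - \<gamma> * V s' + lam * ln (pmf (\<pi> s) a))\<^sup>2)"

definition lossR ::
  "(nat \<Rightarrow> nat \<Rightarrow> real) \<Rightarrow> real \<Rightarrow> real \<Rightarrow> nat \<Rightarrow> (nat \<Rightarrow> nat \<times> nat \<times> nat)
    \<Rightarrow> (nat \<Rightarrow> nat \<Rightarrow> real) \<Rightarrow> (nat \<Rightarrow> real) \<Rightarrow> policy \<Rightarrow> real" where
  "lossR R \<gamma> lam n D g V \<pi> =
     (1 / real n) * (\<Sum>i<n. case D i of (s, a, s') \<Rightarrow>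
        (g s a - R s a - \<gamma> * V s' + lam * ln (pmf (\<pi> s) a))\<^sup>2)"

definition sbeedObj ::
  "(nat \<Rightarrow> nat \<Rightarrow> real) \<Rightarrow> real \<Rightarrow> real \<Rightarrow> nat \<Rightarrow> (nat \<Rightarrow> nat \<times> nat \<times> nat)
    \<Rightarrow> (nat \<Rightarrow> nat \<Rightarrow> real) set \<Rightarrow> (nat \<Rightarrow> real) \<Rightarrow> policy \<Rightarrow> real" where
  "sbeedObj R \<gamma> lam n D GG V \<pi> =
     Max ((\<lambda>g. lossL R \<gamma> lam n D V \<pi> - lossR R \<gamma> lam n D g V \<pi>) ` GG)"

definition sbeedOutputs ::
  "(nat \<Rightarrow> nat \<Rightarrow> real) \<Rightarrow> real \<Rightarrow> real \<Rightarrow> nat \<Rightarrow> (nat \<Rightarrow> nat \<times> nat \<times> nat)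
    \<Rightarrow> (nat \<Rightarrow> real) set \<Rightarrow> policy set \<Rightarrow> (nat \<Rightarrow> nat \<Rightarrow> real) set
    \<Rightarrow> ((nat \<Rightarrow> real) \<times> policy) set" where
  "sbeedOutputs R \<gamma> lam n D VV PP GG =
     {(V, \<pi>) \<in> VV \<times> PP. \<forall>V'\<in>VV. \<forall>\<pi>'\<in>PP.
        sbeedObj R \<gamma> lam n D GG V \<pi> \<le> sbeedObj R \<gamma> lam n D GG V' \<pi>'}"

definition samplePmf :: "(nat \<times> nat) pmf \<Rightarrow> (nat \<Rightarrow> nat \<Rightarrow> nat pmf) \<Rightarrow> (nat \<times> nat \<times> nat) pmf" where
  "samplePmf \<mu> P = bind_pmf \<mu> (\<lambda>(s, a). map_pmf (\<lambda>s'. (s, a, s')) (P s a))"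

definition datasetPmf :: "nat \<Rightarrow> (nat \<times> nat) pmf \<Rightarrow> (nat \<Rightarrow> nat \<Rightarrow> nat pmf)
    \<Rightarrow> (nat \<Rightarrow> nat \<times> nat \<times> nat) pmf" where
  "datasetPmf n \<mu> P = Pi_pmf {..<n} (0, 0, 0) (\<lambda>_. samplePmf \<mu> P)"

end

theory Submission
  imports Defs
begin

lemma exp_le_quad:
  fixes x :: real assumes "\<bar>x\<bar> \<le> 1" shows "exp x \<le> 1 + x + x\<^sup>2"
proof (cases "x \<ge> 0")
  case True thus ?thesis using assms exp_bound by auto
next
  case False
  define y where "y = -x"
  have y: "y > 0" using False y_def by auto
  have "exp y \<ge> 1 + y" using exp_ge_add_one_self .
  hence "exp (-y) \<le> 1 / (1 + y)" using y by (simp add: exp_minus field_simps)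
  also have "1 / (1 + y) \<le> 1 - y + y\<^sup>2"
  proof -
    have "(1 - y + y\<^sup>2) * (1 + y) = 1 + y^3" by (simp add: algebra_simps power2_eq_square power3_eq_cube)
    hence "1 \<le> (1 - y + y\<^sup>2) * (1 + y)" using y by simp
    thus ?thesis using y by (simp add: field_simps)
  qed
  finally show ?thesis by (simp add: y_def)
qed

lemma chernoff_pi:
  fixes q :: "'a pmf" and h :: "'a \<Rightarrow> real"
  defines "m \<equiv> measure_pmf.expectation q h"
  assumes fin: "finite (set_pmf q)"
    and bnd: "\<forall>z\<in>set_pmf q. \<bar>h z - m\<bar> \<le> b"
    and var: "measure_pmf.expectation q (\<lambda>z. (h z - m)\<^sup>2) \<le> \<sigma>\<^sup>2"
    and t: "t > 0" "t * b \<le> 1"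
  shows "measure_pmf.prob (Pi_pmf {..<n} d (\<lambda>_. q))
           {D. (\<Sum>i<n. h (D i)) - real n * m > real n * \<epsilon>}
         \<le> exp (- t * real n * \<epsilon> + real n * t\<^sup>2 * \<sigma>\<^sup>2)"
proof -
  let ?Q = "Pi_pmf {..<n} d (\<lambda>_. q)"
  let ?E = "{D. (\<Sum>i<n. h (D i)) - real n * m > real n * \<epsilon>}"
  have finQ: "finite (set_pmf ?Q)"
    by (subst set_Pi_pmf) (auto intro!: finite_PiE_dflt fin)
  define F where "F = (\<lambda>D. exp (- t * real n * \<epsilon>) * (\<Prod>i<n. exp (t * (h (D i) - m))))"
  have F_eq: "F D = exp (t * ((\<Sum>i<n. h (D i)) - real n * m) - t * real n * \<epsilon>)" for D
  proof -
    have "(\<Prod>i<n. exp (t * (h (D i) - m))) = exp (\<Sum>i<n. t * (h (D i) - m))"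
      by (simp add: exp_sum)
    also have "(\<Sum>i<n. t * (h (D i) - m)) = t * ((\<Sum>i<n. h (D i)) - real n * m)"
      by (simp add: sum_distrib_left sum_subtractf right_diff_distrib)
    finally show ?thesis unfolding F_def by (simp add: exp_add[symmetric] algebra_simps)
  qed
  have ind_le: "indicator ?E D \<le> F D" for D
  proof (cases "D \<in> ?E")
    case True
    hence "t * ((\<Sum>i<n. h (D i)) - real n * m) - t * real n * \<epsilon> \<ge> 0"
      using t by (simp add: right_diff_distrib[symmetric] mult.assoc)
    thus ?thesis using True by (simp add: F_eq)
  next
    case False thus ?thesis by (simp add: F_eq)
  qed
  have "measure_pmf.prob ?Q ?E = measure_pmf.expectation ?Q (indicator ?E)"
    by simp
  also have "\<dots> \<le> measure_pmf.expectation ?Q F"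
    by (intro integral_mono integrable_measure_pmf_finite finQ ind_le)
  also have "\<dots> = exp (- t * real n * \<epsilon>) * measure_pmf.expectation ?Q (\<lambda>D. \<Prod>i<n. exp (t * (h (D i) - m)))"
    unfolding F_def by simp
  also have "measure_pmf.expectation ?Q (\<lambda>D. \<Prod>i<n. exp (t * (h (D i) - m)))
        = (\<Prod>i<n. measure_pmf.expectation q (\<lambda>v. exp (t * (h v - m))))"
    by (rule expectation_prod_Pi_pmf) (auto intro: integrable_measure_pmf_finite fin)
  also have "\<dots> = (measure_pmf.expectation q (\<lambda>v. exp (t * (h v - m)))) ^ n" by simp
  also have "measure_pmf.expectation q (\<lambda>v. exp (t * (h v - m))) \<le> exp (t\<^sup>2 * \<sigma>\<^sup>2)"
  proof -
    have "measure_pmf.expectation q (\<lambda>v. exp (t * (h v - m)))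
        \<le> measure_pmf.expectation q (\<lambda>v. 1 + t * (h v - m) + t\<^sup>2 * (h v - m)\<^sup>2)"
    proof (intro integral_mono_AE integrable_measure_pmf_finite fin AE_pmfI)
      fix v assume v: "v \<in> set_pmf q"
      have "\<bar>t * (h v - m)\<bar> \<le> 1"
      proof -
        have "\<bar>t * (h v - m)\<bar> = t * \<bar>h v - m\<bar>" using t by (simp add: abs_mult)
        also have "\<dots> \<le> t * b" using bnd v t by (intro mult_left_mono) auto
        finally show ?thesis using t by simp
      qed
      from exp_le_quad[OF this] show "exp (t * (h v - m)) \<le> 1 + t * (h v - m) + t\<^sup>2 * (h v - m)\<^sup>2"
        by (simp add: power_mult_distrib)
    qed
    also have "\<dots> = 1 + t * (measure_pmf.expectation q h - m) + t\<^sup>2 * measure_pmf.expectation q (\<lambda>v. (h v - m)\<^sup>2)"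
      using fin by (simp add: integrable_measure_pmf_finite Bochner_Integration.integral_add
             Bochner_Integration.integral_diff)
    also have "\<dots> = 1 + t\<^sup>2 * measure_pmf.expectation q (\<lambda>v. (h v - m)\<^sup>2)" by (simp add: m_def)
    also have "\<dots> \<le> 1 + t\<^sup>2 * \<sigma>\<^sup>2" using var by (intro add_left_mono mult_left_mono) auto
    also have "\<dots> \<le> exp (t\<^sup>2 * \<sigma>\<^sup>2)" by (rule exp_ge_add_one_self)
    finally show ?thesis .
  qed
  hence "(measure_pmf.expectation q (\<lambda>v. exp (t * (h v - m)))) ^ n \<le> exp (t\<^sup>2 * \<sigma>\<^sup>2) ^ n"
    by (intro power_mono) auto
  hence "exp (- t * real n * \<epsilon>) * (measure_pmf.expectation q (\<lambda>v. exp (t * (h v - m)))) ^ n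
        \<le> exp (- t * real n * \<epsilon>) * exp (t\<^sup>2 * \<sigma>\<^sup>2) ^ n" by (intro mult_left_mono) auto
  also have "\<dots> = exp (- t * real n * \<epsilon> + real n * t\<^sup>2 * \<sigma>\<^sup>2)"
  proof -
    have "exp (t\<^sup>2 * \<sigma>\<^sup>2) ^ n = exp (real n * (t\<^sup>2 * \<sigma>\<^sup>2))"
      by (simp add: exp_of_nat_mult)
    thus ?thesis by (simp add: exp_add[symmetric] algebra_simps)
  qed
  finally show ?thesis by simp
qed

lemma bernstein_pi:
  fixes q :: "'a pmf" and h :: "'a \<Rightarrow> real"
  defines "m \<equiv> measure_pmf.expectation q h"
  assumes fin: "finite (set_pmf q)"
    and bnd: "\<forall>z\<in>set_pmf q. \<bar>h z - m\<bar> \<le> b"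
    and var: "measure_pmf.expectation q (\<lambda>z. (h z - m)\<^sup>2) \<le> \<sigma>\<^sup>2"
    and b: "b \<ge> 0" and sig: "\<sigma> \<ge> 0" and u: "u > 0" and n: "n > 0"
  shows "measure_pmf.prob (Pi_pmf {..<n} d (\<lambda>_. q))
           {D. (\<Sum>i<n. h (D i)) - real n * m > real n * (2 * \<sigma> * sqrt (u / real n) + 2 * b * u / real n)}
         \<le> exp (- u)"
proof -
  define \<epsilon> where "\<epsilon> = 2 * \<sigma> * sqrt (u / real n) + 2 * b * u / real n"
  have nr: "real n > 0" using n by simp
  show ?thesis
  proof (cases "b = 0")
    case True
    have "measure_pmf.prob (Pi_pmf {..<n} d (\<lambda>_. q))
           {D. (\<Sum>i<n. h (D i)) - real n * m > real n * \<epsilon>} = 0"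
      unfolding measure_pmf_zero_iff
    proof (rule ccontr)
      assume "set_pmf (Pi_pmf {..<n} d (\<lambda>_. q)) \<inter> {D. (\<Sum>i<n. h (D i)) - real n * m > real n * \<epsilon>} \<noteq> {}"
      then obtain D where D: "D \<in> set_pmf (Pi_pmf {..<n} d (\<lambda>_. q))"
        and gt: "(\<Sum>i<n. h (D i)) - real n * m > real n * \<epsilon>" by blast
      have "\<forall>i<n. D i \<in> set_pmf q" using D by (subst (asm) set_Pi_pmf) (auto simp: PiE_dflt_def)
      hence "\<forall>i<n. h (D i) = m" using bnd True by auto
      hence "(\<Sum>i<n. h (D i)) = real n * m" by simp
      moreover have "\<epsilon> \<ge> 0" using sig b u nr unfolding \<epsilon>_def by (intro add_nonneg_nonneg) auto
      ultimately show False using gt nr by (smt (verit) mult_nonneg_nonneg)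
    qed
    thus ?thesis by (simp add: \<epsilon>_def)
  next
    case False
    hence bp: "b > 0" using b by simp
    show ?thesis
    proof (cases "real n * \<sigma>\<^sup>2 \<le> u * b\<^sup>2")
      case True
      have "measure_pmf.prob (Pi_pmf {..<n} d (\<lambda>_. q))
           {D. (\<Sum>i<n. h (D i)) - real n * m > real n * \<epsilon>}
         \<le> exp (- (1/b) * real n * \<epsilon> + real n * (1/b)\<^sup>2 * \<sigma>\<^sup>2)"
        using bp by (intro chernoff_pi[OF fin bnd[unfolded m_def] var[unfolded m_def], folded m_def]) auto
      also have "\<dots> \<le> exp (- u)"
      proof -
        have e1: "(1/b) * real n * \<epsilon> \<ge> 2 * u"
        proof -
          have "(1/b) * real n * \<epsilon> \<ge> (1/b) * real n * (2 * b * u / real n)"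
            unfolding \<epsilon>_def using bp nr sig u by (intro mult_left_mono) auto
          thus ?thesis using bp nr by (simp add: field_simps)
        qed
        have e2: "real n * (1/b)\<^sup>2 * \<sigma>\<^sup>2 \<le> u"
          using True bp by (simp add: field_simps power2_eq_square)
        show ?thesis using e1 e2 by simp
      qed
      finally show ?thesis by (simp add: \<epsilon>_def)
    next
      case False
      hence sp: "\<sigma> > 0" using sig u bp nr by (cases "\<sigma> = 0") auto
      define t where "t = sqrt (u / (real n * \<sigma>\<^sup>2))"
      have tpos: "t > 0" unfolding t_def using sp u nr by simp
      have t2: "t\<^sup>2 = u / (real n * \<sigma>\<^sup>2)" unfolding t_def using sp u nr by simp
      have "t\<^sup>2 * b\<^sup>2 = (u * b\<^sup>2) / (real n * \<sigma>\<^sup>2)" using t2 by simp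
      also have "\<dots> \<le> 1" using False sp nr by (subst divide_le_eq_1_pos) auto
      finally have "t\<^sup>2 * b\<^sup>2 \<le> 1" .
      hence tb2: "(t * b)\<^sup>2 \<le> 1\<^sup>2" by (simp add: power_mult_distrib)
      have tb: "t * b \<le> 1" by (rule power2_le_imp_le[OF tb2]) simp
      have "measure_pmf.prob (Pi_pmf {..<n} d (\<lambda>_. q))
           {D. (\<Sum>i<n. h (D i)) - real n * m > real n * \<epsilon>}
         \<le> exp (- t * real n * \<epsilon> + real n * t\<^sup>2 * \<sigma>\<^sup>2)"
        using tpos tb by (intro chernoff_pi[OF fin bnd[unfolded m_def] var[unfolded m_def], folded m_def]) auto
      also have "\<dots> \<le> exp (- u)"
      proof -
        have e2: "real n * t\<^sup>2 * \<sigma>\<^sup>2 = u" using t2 sp nr by (simp add: field_simps)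
        have "t * real n * \<epsilon> \<ge> t * real n * (2 * \<sigma> * sqrt (u / real n))"
          unfolding \<epsilon>_def using tpos nr bp u by (intro mult_left_mono) auto
        also have "t * real n * (2 * \<sigma> * sqrt (u / real n)) = 2 * u"
        proof -
          have st: "t = sqrt u / (sqrt (real n) * \<sigma>)"
            unfolding t_def using sp by (simp add: real_sqrt_divide real_sqrt_mult)
          have "t * sqrt (u / real n) = (sqrt u * sqrt u) / (sqrt (real n) * sqrt (real n) * \<sigma>)"
            unfolding st by (simp add: real_sqrt_divide)
          also have "\<dots> = u / (real n * \<sigma>)" using u nr by simp
          finally have "t * sqrt (u / real n) = u / (real n * \<sigma>)" .
          have "t * real n * (2 * \<sigma> * sqrt (u / real n)) = 2 * \<sigma> * real n * (t * sqrt (u / real n))"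
            by (simp only: mult_ac)
          also have "\<dots> = 2 * \<sigma> * real n * (u / (real n * \<sigma>))" by (simp only: \<open>t * sqrt (u / real n) = u / (real n * \<sigma>)\<close>)
          also have "\<dots> = 2 * u" using sp nr by simp
          finally show ?thesis .
        qed
        finally show ?thesis using e2 by simp
      qed
      finally show ?thesis by (simp add: \<epsilon>_def)
    qed
  qed
qed


lemma pmf_E_mono:
  fixes f g :: "'a \<Rightarrow> real"
  assumes "finite (set_pmf p)" "\<And>x. x \<in> set_pmf p \<Longrightarrow> f x \<le> g x"
  shows "measure_pmf.expectation p f \<le> measure_pmf.expectation p g"
  using assms by (intro integral_mono_AE integrable_measure_pmf_finite AE_pmfI) auto

lemma pmf_E_cong:
  fixes f g :: "'a \<Rightarrow> real"
  assumes "\<And>x. x \<in> set_pmf p \<Longrightarrow> f x = g x"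
  shows "measure_pmf.expectation p f = measure_pmf.expectation p g"
  using assms by (intro integral_cong_AE AE_pmfI) auto

definition hz :: "(nat \<Rightarrow> nat \<Rightarrow> real) \<Rightarrow> real \<Rightarrow> real \<Rightarrow> (nat \<Rightarrow> real) \<Rightarrow> policy
    \<Rightarrow> (nat \<Rightarrow> nat \<Rightarrow> real) \<Rightarrow> nat \<times> nat \<times> nat \<Rightarrow> real" where
  "hz R \<gamma> lam V \<pi> g z = (case z of (s, a, s') \<Rightarrow>
     (V s - R s a - \<gamma> * V s' + lam * ln (pmf (\<pi> s) a))\<^sup>2 - (g s a - R s a - \<gamma> * V s' + lam * ln (pmf (\<pi> s) a))\<^sup>2)"

lemma emp_eq:
  "lossL R \<gamma> lam n D V \<pi> - lossR R \<gamma> lam n D g V \<pi> = (\<Sum>i<n. hz R \<gamma> lam V \<pi> g (D i)) / real n"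
proof -
  have "(\<Sum>i<n. case D i of (s, a, s') \<Rightarrow> (V s - R s a - \<gamma> * V s' + lam * ln (pmf (\<pi> s) a))\<^sup>2)
      - (\<Sum>i<n. case D i of (s, a, s') \<Rightarrow> (g s a - R s a - \<gamma> * V s' + lam * ln (pmf (\<pi> s) a))\<^sup>2)
      = (\<Sum>i<n. hz R \<gamma> lam V \<pi> g (D i))"
    unfolding sum_subtractf[symmetric] hz_def
    by (intro sum.cong refl) (auto split: prod.splits)
  thus ?thesis unfolding lossL_def lossR_def by (metis (no_types, lifting) diff_divide_distrib divide_inverse_commute inverse_eq_divide)
qed

locale sbeed_setting =
  fixes S A :: "nat set" and P :: "nat \<Rightarrow> nat \<Rightarrow> nat pmf" and R :: "nat \<Rightarrow> nat \<Rightarrow> real"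
    and Rmax \<gamma> lam :: real and \<mu> :: "(nat \<times> nat) pmf"
    and VV :: "(nat \<Rightarrow> real) set" and PP :: "policy set" and GG :: "(nat \<Rightarrow> nat \<Rightarrow> real) set"
  assumes finS: "finite S" and Sne: "S \<noteq> {}" and finA: "finite A" and Ane: "A \<noteq> {}"
    and Psub: "\<forall>s\<in>S. \<forall>a\<in>A. set_pmf (P s a) \<subseteq> S"
    and Rb: "\<forall>s\<in>S. \<forall>a\<in>A. 0 \<le> R s a \<and> R s a \<le> Rmax"
    and g0: "0 \<le> \<gamma>" and g1: "\<gamma> < 1" and lam0: "lam > 0"
    and musub: "set_pmf \<mu> \<subseteq> S \<times> A"
    and finV: "finite VV" and Vne: "VV \<noteq> {}" and finP: "finite PP" and Pne: "PP \<noteq> {}"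
    and finG: "finite GG" and Gne: "GG \<noteq> {}"
    and Vb: "\<forall>V\<in>VV. \<forall>s\<in>S. 0 \<le> V s \<and> V s \<le> Vlmax \<gamma> Rmax lam A"
    and Pib: "\<forall>\<pi>\<in>PP. \<forall>s\<in>S. set_pmf (\<pi> s) \<subseteq> A \<and>
        (\<forall>a\<in>A. pmf (\<pi> s) a > 0 \<and> \<bar>ln (pmf (\<pi> s) a)\<bar> \<le> Vlmax \<gamma> Rmax lam A / lam)"
    and Gb: "\<forall>g\<in>GG. \<forall>s\<in>S. \<forall>a\<in>A. 0 \<le> g s a \<and> g s a \<le> 2 * Vlmax \<gamma> Rmax lam A"
begin

abbreviation "Vm \<equiv> Vlmax \<gamma> Rmax lam A"
abbreviation "q \<equiv> samplePmf \<mu> P"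
abbreviation "CC V \<pi> \<equiv> softBellman R P \<gamma> lam \<pi> V"
abbreviation "hh V \<pi> g \<equiv> hz R \<gamma> lam V \<pi> g"

lemma Rmax_le: "Rmax \<le> (1 - \<gamma>) * Vm" and Vm_nn: "Vm \<ge> 0"
proof -
  obtain s a where "s \<in> S" "a \<in> A" using Sne Ane by blast
  hence R0: "Rmax \<ge> 0" using Rb by force
  have "card A \<ge> 1" using finA Ane by (simp add: Suc_le_eq card_gt_0_iff)
  hence l: "ln (real (card A)) \<ge> 0" by simp
  have "(1 - \<gamma>) * Vm = Rmax + lam * ln (real (card A))" using g1 unfolding Vlmax_def by simp
  thus "Rmax \<le> (1 - \<gamma>) * Vm" using l lam0 by simp
  show "Vm \<ge> 0" unfolding Vlmax_def using R0 l lam0 g1 by simp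
qed

lemma fin_mu: "finite (set_pmf \<mu>)"
  using musub finS finA by (meson finite_SigmaI finite_subset)

lemma fin_P: "(s, a) \<in> set_pmf \<mu> \<Longrightarrow> finite (set_pmf (P s a))"
  using musub Psub finS by (meson SigmaD1 SigmaD2 finite_subset subsetD)

lemma q_set: "z \<in> set_pmf q \<Longrightarrow> \<exists>s a s'. z = (s, a, s') \<and> (s, a) \<in> set_pmf \<mu> \<and> s' \<in> set_pmf (P s a)"
  unfolding samplePmf_def by auto

lemma fin_q: "finite (set_pmf q)"
proof -
  have "set_pmf q \<subseteq> (\<Union>x\<in>set_pmf \<mu>. (\<lambda>s'. (fst x, snd x, s')) ` set_pmf (P (fst x) (snd x)))"
    using q_set by force
  moreover have "finite (\<Union>x\<in>set_pmf \<mu>. (\<lambda>s'. (fst x, snd x, s')) ` set_pmf (P (fst x) (snd x)))"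
    using fin_mu fin_P by auto
  ultimately show ?thesis by (rule finite_subset)
qed

lemma Eq: fixes f :: "nat \<times> nat \<times> nat \<Rightarrow> real" shows "measure_pmf.expectation q f =
    measure_pmf.expectation \<mu> (\<lambda>(s, a). measure_pmf.expectation (P s a) (\<lambda>s'. f (s, a, s')))"
proof -
  have "measure_pmf.expectation q f =
     (\<Sum>x\<in>set_pmf \<mu>. pmf \<mu> x *\<^sub>R measure_pmf.expectation ((\<lambda>(s, a). map_pmf (\<lambda>s'. (s, a, s')) (P s a)) x) f)"
    unfolding samplePmf_def
    by (rule pmf_expectation_bind[where A="set_pmf \<mu>" and p=\<mu> and h=f
          and f="\<lambda>(s, a). map_pmf (\<lambda>s'. (s, a, s')) (P s a)", OF fin_mu]) (auto simp: fin_P)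
  also have "\<dots> = (\<Sum>x\<in>set_pmf \<mu>. pmf \<mu> x *\<^sub>R (\<lambda>(s, a). measure_pmf.expectation (P s a) (\<lambda>s'. f (s, a, s'))) x)"
    by (intro sum.cong refl) (auto split: prod.splits)
  also have "\<dots> = measure_pmf.expectation \<mu> (\<lambda>(s, a). measure_pmf.expectation (P s a) (\<lambda>s'. f (s, a, s')))"
    by (rule integral_measure_pmf[OF fin_mu, symmetric]) auto
  finally show ?thesis .
qed

lemma Eq_sa: fixes F :: "nat \<Rightarrow> nat \<Rightarrow> real" shows "measure_pmf.expectation q (\<lambda>(s, a, s'). F s a) = measure_pmf.expectation \<mu> (\<lambda>(s, a). F s a)"
  by (subst Eq, rule pmf_E_cong) auto


lemma sq_le: fixes x c :: real assumes "\<bar>x\<bar> \<le> c" shows "x\<^sup>2 \<le> c\<^sup>2"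
  using power_mono[OF assms abs_ge_zero, of 2] by simp

lemma pt:
  assumes V: "V \<in> VV" and pi: "\<pi> \<in> PP" and g: "g \<in> GG" and sa: "(s, a) \<in> set_pmf \<mu>"
    and s': "s' \<in> set_pmf (P s a)"
  defines "Y \<equiv> R s a + \<gamma> * V s' - lam * ln (pmf (\<pi> s) a)"
  shows "0 \<le> V s" "V s \<le> Vm" "0 \<le> g s a" "g s a \<le> 2 * Vm" "0 \<le> Y" "Y \<le> 2 * Vm"
    and "hh V \<pi> g (s, a, s') = (V s - Y)\<^sup>2 - (g s a - Y)\<^sup>2"
proof -
  have sS: "s \<in> S" and aA: "a \<in> A" using sa musub by auto
  have s'S: "s' \<in> S" using s' Psub sS aA by auto
  show "0 \<le> V s" "V s \<le> Vm" using Vb V sS by auto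
  show "0 \<le> g s a" "g s a \<le> 2 * Vm" using Gb g sS aA by auto
  have v': "0 \<le> V s'" "V s' \<le> Vm" using Vb V s'S by auto
  have r: "0 \<le> R s a" "R s a \<le> Rmax" using Rb sS aA by auto
  have p: "pmf (\<pi> s) a > 0" "\<bar>ln (pmf (\<pi> s) a)\<bar> \<le> Vm / lam" using Pib pi sS aA by auto
  have lnle: "ln (pmf (\<pi> s) a) \<le> 0" using p(1) pmf_le_1 by (simp add: ln_le_zero_iff)
  have l1: "- lam * ln (pmf (\<pi> s) a) = lam * \<bar>ln (pmf (\<pi> s) a)\<bar>" using lnle by simp
  have l2: "lam * \<bar>ln (pmf (\<pi> s) a)\<bar> \<le> Vm" using p(2) lam0 by (simp add: field_simps)
  have l3: "lam * \<bar>ln (pmf (\<pi> s) a)\<bar> \<ge> 0" using lam0 by simp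
  have gv: "\<gamma> * V s' \<le> \<gamma> * Vm" "0 \<le> \<gamma> * V s'" using v' g0 by (auto intro: mult_left_mono)
  show "0 \<le> Y" unfolding Y_def using r gv l1 l3 by linarith
  show "Y \<le> 2 * Vm" unfolding Y_def using r gv l1 l2 Rmax_le by (simp add: algebra_simps)
  have e1: "V s - R s a - \<gamma> * V s' + lam * ln (pmf (\<pi> s) a) = V s - Y" unfolding Y_def by simp
  have e2: "g s a - R s a - \<gamma> * V s' + lam * ln (pmf (\<pi> s) a) = g s a - Y" unfolding Y_def by simp
  show "hh V \<pi> g (s, a, s') = (V s - Y)\<^sup>2 - (g s a - Y)\<^sup>2" unfolding hz_def by (simp only: e1 e2 prod.case)
qed

lemma hh_bnd:
  assumes V: "V \<in> VV" and pi: "\<pi> \<in> PP" and g: "g \<in> GG" and z: "z \<in> set_pmf q"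
  shows "\<bar>hh V \<pi> g z\<bar> \<le> 4 * Vm\<^sup>2"
    and "(hh V \<pi> g z)\<^sup>2 \<le> 16 * Vm\<^sup>2 * (V (fst z) - g (fst z) (fst (snd z)))\<^sup>2"
proof -
  obtain s a s' where zz: "z = (s, a, s')" and sa: "(s, a) \<in> set_pmf \<mu>" and s': "s' \<in> set_pmf (P s a)"
    using q_set[OF z] by blast
  define Y where "Y \<equiv> R s a + \<gamma> * V s' - lam * ln (pmf (\<pi> s) a)"
  note B = pt[OF V pi g sa s', folded Y_def]
  have q1: "(V s - Y)\<^sup>2 \<le> (2 * Vm)\<^sup>2" using B by (intro sq_le) linarith
  have q2: "(g s a - Y)\<^sup>2 \<le> (2 * Vm)\<^sup>2" using B by (intro sq_le) linarith
  have "\<bar>(V s - Y)\<^sup>2 - (g s a - Y)\<^sup>2\<bar> \<le> (2 * Vm)\<^sup>2"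
    using q1 q2 by (smt (verit) zero_le_power2)
  thus "\<bar>hh V \<pi> g z\<bar> \<le> 4 * Vm\<^sup>2" using B zz by (simp add: power_mult_distrib)
  have "(V s + g s a - 2 * Y)\<^sup>2 \<le> (4 * Vm)\<^sup>2" using B by (intro sq_le) linarith
  hence "(V s - g s a)\<^sup>2 * (V s + g s a - 2 * Y)\<^sup>2 \<le> (V s - g s a)\<^sup>2 * (4 * Vm)\<^sup>2"
    by (intro mult_left_mono) auto
  moreover have "((V s - Y)\<^sup>2 - (g s a - Y)\<^sup>2)\<^sup>2 = (V s - g s a)\<^sup>2 * (V s + g s a - 2 * Y)\<^sup>2"
    by (simp add: power2_eq_square algebra_simps)
  ultimately show "(hh V \<pi> g z)\<^sup>2 \<le> 16 * Vm\<^sup>2 * (V (fst z) - g (fst z) (fst (snd z)))\<^sup>2"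
    using B zz by (simp add: power_mult_distrib mult.commute)
qed

lemma inner_E:
  assumes V: "V \<in> VV" and pi: "\<pi> \<in> PP" and g: "g \<in> GG" and sa: "(s, a) \<in> set_pmf \<mu>"
  shows "measure_pmf.expectation (P s a) (\<lambda>s'. hh V \<pi> g (s, a, s'))
       = (V s - CC V \<pi> s a)\<^sup>2 - (g s a - CC V \<pi> s a)\<^sup>2"
proof -
  define K where "K = R s a - lam * ln (pmf (\<pi> s) a)"
  define EV where "EV = measure_pmf.expectation (P s a) V"
  have hx: "hh V \<pi> g (s, a, s') = ((V s - K)\<^sup>2 - (g s a - K)\<^sup>2) + (- 2 * \<gamma> * (V s - g s a)) * V s'" for s'
    unfolding hz_def K_def by (simp add: power2_eq_square algebra_simps)
  have "measure_pmf.expectation (P s a) (\<lambda>s'. hh V \<pi> g (s, a, s'))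
      = measure_pmf.expectation (P s a) (\<lambda>s'. ((V s - K)\<^sup>2 - (g s a - K)\<^sup>2) + (- 2 * \<gamma> * (V s - g s a)) * V s')"
    by (simp only: hx)
  also have "\<dots> = ((V s - K)\<^sup>2 - (g s a - K)\<^sup>2) + (- 2 * \<gamma> * (V s - g s a)) * EV"
    unfolding EV_def using fin_P[OF sa]
    by (simp add: integrable_measure_pmf_finite Bochner_Integration.integral_add)
  also have "\<dots> = (V s - (K + \<gamma> * EV))\<^sup>2 - (g s a - (K + \<gamma> * EV))\<^sup>2"
    by (simp add: power2_eq_square algebra_simps)
  also have "K + \<gamma> * EV = CC V \<pi> s a" unfolding K_def EV_def softBellman_def by simp
  finally show ?thesis .
qed

lemma m_eq:
  assumes V: "V \<in> VV" and pi: "\<pi> \<in> PP" and g: "g \<in> GG"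
  shows "measure_pmf.expectation q (hh V \<pi> g)
     = (norm2mu \<mu> (\<lambda>s a. V s - CC V \<pi> s a))\<^sup>2 - (norm2mu \<mu> (\<lambda>s a. g s a - CC V \<pi> s a))\<^sup>2"
proof -
  have "measure_pmf.expectation q (hh V \<pi> g)
      = measure_pmf.expectation \<mu> (\<lambda>(s, a). measure_pmf.expectation (P s a) (\<lambda>s'. hh V \<pi> g (s, a, s')))"
    by (rule Eq)
  also have "\<dots> = measure_pmf.expectation \<mu> (\<lambda>x. (\<lambda>(s, a). (V s - CC V \<pi> s a)\<^sup>2) x - (\<lambda>(s, a). (g s a - CC V \<pi> s a)\<^sup>2) x)"
    by (rule pmf_E_cong) (auto simp: inner_E[OF V pi g])
  also have "\<dots> = measure_pmf.expectation \<mu> (\<lambda>(s, a). (V s - CC V \<pi> s a)\<^sup>2)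
       - measure_pmf.expectation \<mu> (\<lambda>(s, a). (g s a - CC V \<pi> s a)\<^sup>2)"
    by (rule Bochner_Integration.integral_diff) (auto intro: integrable_measure_pmf_finite fin_mu)
  also have "\<dots> = (norm2mu \<mu> (\<lambda>s a. V s - CC V \<pi> s a))\<^sup>2 - (norm2mu \<mu> (\<lambda>s a. g s a - CC V \<pi> s a))\<^sup>2"
    unfolding norm2mu_def
    by (subst (1 2) real_sqrt_pow2) (auto intro!: integral_nonneg_AE AE_pmfI)
  finally show ?thesis .
qed


lemma normsq: "(norm2mu \<mu> f)\<^sup>2 = measure_pmf.expectation \<mu> (\<lambda>(s, a). (f s a)\<^sup>2)"
proof -
  have "0 \<le> measure_pmf.expectation \<mu> (\<lambda>(s, a). (f s a)\<^sup>2)"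
    by (intro Bochner_Integration.integral_nonneg_AE AE_pmfI) (auto split: prod.splits)
  thus ?thesis unfolding norm2mu_def by simp
qed

lemma norm_nn: "norm2mu \<mu> f \<ge> 0"
  unfolding norm2mu_def
  by (intro real_sqrt_ge_zero Bochner_Integration.integral_nonneg_AE AE_pmfI) (auto split: prod.splits)

lemma m_bnd:
  assumes V: "V \<in> VV" and pi: "\<pi> \<in> PP" and g: "g \<in> GG"
  shows "\<bar>measure_pmf.expectation q (hh V \<pi> g)\<bar> \<le> 4 * Vm\<^sup>2"
proof -
  have "measure_pmf.expectation q (hh V \<pi> g) \<le> measure_pmf.expectation q (\<lambda>_. 4 * Vm\<^sup>2)"
  proof (intro pmf_E_mono fin_q)
    fix z assume "z \<in> set_pmf q"
    from hh_bnd(1)[OF V pi g this] show "hh V \<pi> g z \<le> 4 * Vm\<^sup>2" by linarith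
  qed
  moreover have "measure_pmf.expectation q (\<lambda>_. - (4 * Vm\<^sup>2)) \<le> measure_pmf.expectation q (hh V \<pi> g)"
  proof (intro pmf_E_mono fin_q)
    fix z assume "z \<in> set_pmf q"
    from hh_bnd(1)[OF V pi g this] show "- (4 * Vm\<^sup>2) \<le> hh V \<pi> g z" by linarith
  qed
  ultimately show ?thesis by simp
qed

lemma var_bnd:
  assumes V: "V \<in> VV" and pi: "\<pi> \<in> PP" and g: "g \<in> GG"
  defines "m \<equiv> measure_pmf.expectation q (hh V \<pi> g)"
    and "Aa \<equiv> norm2mu \<mu> (\<lambda>s a. V s - CC V \<pi> s a)"
    and "ee \<equiv> norm2mu \<mu> (\<lambda>s a. g s a - CC V \<pi> s a)"
  shows "measure_pmf.expectation q (\<lambda>z. (hh V \<pi> g z - m)\<^sup>2) \<le> (6 * Vm * (Aa + ee))\<^sup>2"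
proof -
  have I: "integrable (measure_pmf q) f" for f :: "_ \<Rightarrow> real" by (rule integrable_measure_pmf_finite[OF fin_q])
  have I2: "integrable (measure_pmf \<mu>) f" for f :: "_ \<Rightarrow> real" by (rule integrable_measure_pmf_finite[OF fin_mu])
  have fe: "(\<lambda>z. (hh V \<pi> g z - m)\<^sup>2) = (\<lambda>z. (hh V \<pi> g z)\<^sup>2 + ((- 2 * m) * hh V \<pi> g z + m\<^sup>2))"
    by (auto simp: fun_eq_iff power2_eq_square algebra_simps)
  have "measure_pmf.expectation q (\<lambda>z. (hh V \<pi> g z - m)\<^sup>2)
      = measure_pmf.expectation q (\<lambda>z. (hh V \<pi> g z)\<^sup>2) + ((- 2 * m) * m + m\<^sup>2)"
    unfolding fe by (simp add: I Bochner_Integration.integral_add m_def)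
  also have "\<dots> \<le> measure_pmf.expectation q (\<lambda>z. (hh V \<pi> g z)\<^sup>2)"
    by (simp add: power2_eq_square)
  also have "\<dots> \<le> measure_pmf.expectation q (\<lambda>z. 16 * Vm\<^sup>2 * (V (fst z) - g (fst z) (fst (snd z)))\<^sup>2)"
    by (intro pmf_E_mono fin_q hh_bnd(2)[OF V pi g])
  also have "\<dots> = measure_pmf.expectation q (\<lambda>(s, a, s'). 16 * Vm\<^sup>2 * (V s - g s a)\<^sup>2)"
    by (intro arg_cong[where f="measure_pmf.expectation q"]) (auto simp: fun_eq_iff)
  also have "\<dots> = measure_pmf.expectation \<mu> (\<lambda>(s, a). 16 * Vm\<^sup>2 * (V s - g s a)\<^sup>2)"
    by (rule Eq_sa)
  also have "\<dots> \<le> measure_pmf.expectation \<mu> (\<lambda>x. 32 * Vm\<^sup>2 * ((\<lambda>(s, a). (V s - CC V \<pi> s a)\<^sup>2) x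
              + (\<lambda>(s, a). (g s a - CC V \<pi> s a)\<^sup>2) x))"
  proof (intro pmf_E_mono fin_mu)
    fix x :: "nat \<times> nat"
    obtain s a where x: "x = (s, a)" by fastforce
    have "(V s - g s a)\<^sup>2 \<le> 2 * ((V s - CC V \<pi> s a)\<^sup>2 + (g s a - CC V \<pi> s a)\<^sup>2)"
      by (smt (verit) power2_diff zero_le_power2 power2_sum)
    hence "16 * Vm\<^sup>2 * (V s - g s a)\<^sup>2 \<le> 16 * Vm\<^sup>2 * (2 * ((V s - CC V \<pi> s a)\<^sup>2 + (g s a - CC V \<pi> s a)\<^sup>2))"
      by (intro mult_left_mono) auto
    thus "(case x of (s, a) \<Rightarrow> 16 * Vm\<^sup>2 * (V s - g s a)\<^sup>2)
        \<le> 32 * Vm\<^sup>2 * ((case x of (s, a) \<Rightarrow> (V s - CC V \<pi> s a)\<^sup>2) + (case x of (s, a) \<Rightarrow> (g s a - CC V \<pi> s a)\<^sup>2))"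
      unfolding x by (simp add: algebra_simps)
  qed
  also have "\<dots> = 32 * Vm\<^sup>2 * (Aa\<^sup>2 + ee\<^sup>2)"
    unfolding Aa_def ee_def normsq by (simp add: I2 Bochner_Integration.integral_add)
  also have "\<dots> \<le> (6 * Vm * (Aa + ee))\<^sup>2"
  proof -
    have "Aa \<ge> 0" "ee \<ge> 0" unfolding Aa_def ee_def by (rule norm_nn)+
    hence "Aa\<^sup>2 + ee\<^sup>2 \<le> (Aa + ee)\<^sup>2" by (simp add: power2_sum)
    hence "32 * Vm\<^sup>2 * (Aa\<^sup>2 + ee\<^sup>2) \<le> 36 * Vm\<^sup>2 * (Aa + ee)\<^sup>2"
      by (intro mult_mono) auto
    thus ?thesis by (simp add: power_mult_distrib)
  qed
  finally show ?thesis .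
qed

lemma dev:
  assumes V: "V \<in> VV" and pi: "\<pi> \<in> PP" and g: "g \<in> GG" and c: "\<bar>c\<bar> = 1"
    and u: "u > 0" and n: "n > 0"
  defines "m \<equiv> measure_pmf.expectation q (hh V \<pi> g)"
    and "Aa \<equiv> norm2mu \<mu> (\<lambda>s a. V s - CC V \<pi> s a)"
    and "ee \<equiv> norm2mu \<mu> (\<lambda>s a. g s a - CC V \<pi> s a)"
  shows "measure_pmf.prob (Pi_pmf {..<n} d (\<lambda>_. q))
     {D. (\<Sum>i<n. c * hh V \<pi> g (D i)) - real n * (c * m)
        > real n * (2 * (6 * Vm * (Aa + ee)) * sqrt (u / real n) + 2 * (8 * Vm\<^sup>2) * u / real n)}
     \<le> exp (- u)"
proof -
  have Ec: "measure_pmf.expectation q (\<lambda>z. c * hh V \<pi> g z) = c * m"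
    unfolding m_def by simp
  have bnd: "\<forall>z\<in>set_pmf q. \<bar>c * hh V \<pi> g z - c * m\<bar> \<le> 8 * Vm\<^sup>2"
  proof
    fix z assume z: "z \<in> set_pmf q"
    have "\<bar>c * hh V \<pi> g z - c * m\<bar> = \<bar>hh V \<pi> g z - m\<bar>"
      using c by (simp add: right_diff_distrib[symmetric] abs_mult)
    also have "\<dots> \<le> \<bar>hh V \<pi> g z\<bar> + \<bar>m\<bar>" by simp
    also have "\<dots> \<le> 4 * Vm\<^sup>2 + 4 * Vm\<^sup>2"
      using hh_bnd(1)[OF V pi g z] m_bnd[OF V pi g] unfolding m_def by simp
    finally show "\<bar>c * hh V \<pi> g z - c * m\<bar> \<le> 8 * Vm\<^sup>2" by simp
  qed
  have var: "measure_pmf.expectation q (\<lambda>z. (c * hh V \<pi> g z - c * m)\<^sup>2) \<le> (6 * Vm * (Aa + ee))\<^sup>2"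
  proof -
    have "(\<lambda>z. (c * hh V \<pi> g z - c * m)\<^sup>2) = (\<lambda>z. (hh V \<pi> g z - m)\<^sup>2)"
    proof
      fix z
      have "(c * hh V \<pi> g z - c * m)\<^sup>2 = c\<^sup>2 * (hh V \<pi> g z - m)\<^sup>2"
        by (simp add: power2_eq_square algebra_simps)
      moreover have "c\<^sup>2 = 1" using c by (metis abs_power2 one_power2 power2_abs)
      ultimately show "(c * hh V \<pi> g z - c * m)\<^sup>2 = (hh V \<pi> g z - m)\<^sup>2" by simp
    qed
    thus ?thesis using var_bnd[OF V pi g] unfolding m_def Aa_def ee_def by simp
  qed
  have "Aa \<ge> 0" "ee \<ge> 0" unfolding Aa_def ee_def by (rule norm_nn)+
  hence sig: "6 * Vm * (Aa + ee) \<ge> 0" using Vm_nn by simp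
  show ?thesis
    using bernstein_pi[where q=q and h="\<lambda>z. c * hh V \<pi> g z" and b="8 * Vm\<^sup>2"
        and \<sigma>="6 * Vm * (Aa + ee)" and u=u and n=n and d=d, unfolded Ec, OF fin_q bnd var _ sig u n]
    by simp
qed

end
lemma final_alg:
  fixes x a e e' r O1 O2 :: real
  assumes x: "x \<ge> 0" and a: "a \<ge> 0" and e: "e \<ge> 0" and e': "e' \<ge> 0" and r: "r \<ge> 0"
    and h1: "O1 \<ge> x\<^sup>2 - e\<^sup>2 - (12 * r * (x + e) + 16 * r\<^sup>2)"
    and h2: "O2 \<le> a\<^sup>2 - e'\<^sup>2 + (12 * r * (a + e') + 16 * r\<^sup>2)"
    and h3: "O1 \<le> O2"
  shows "x \<le> 21 * r + a + e"
proof (rule ccontr)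
  assume "\<not> x \<le> 21 * r + a + e"
  hence xg: "x > 21 * r + a + e" by simp
  define M where "M = a + e + 9 * r"
  have M0: "M \<ge> 0" unfolding M_def using a e r by simp
  have s1: "- e'\<^sup>2 + 12 * r * e' \<le> 36 * r\<^sup>2"
  proof -
    have "(e' - 6 * r)\<^sup>2 \<ge> 0" by simp
    thus ?thesis by (simp add: power2_eq_square algebra_simps)
  qed
  have s2: "x\<^sup>2 - 12 * r * x \<le> a\<^sup>2 + e\<^sup>2 + 12 * r * a + 12 * r * e + 68 * r\<^sup>2"
    using h1 h2 h3 s1 by (simp add: algebra_simps)
  have "a\<^sup>2 + e\<^sup>2 + 12 * r * a + 12 * r * e + 68 * r\<^sup>2 \<le> M\<^sup>2"
  proof -
    have "M\<^sup>2 = a\<^sup>2 + e\<^sup>2 + 81 * r\<^sup>2 + 2 * (a * e) + 18 * (r * a) + 18 * (r * e)"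
      unfolding M_def by (simp add: power2_eq_square algebra_simps)
    moreover have "a * e \<ge> 0" "r * a \<ge> 0" "r * e \<ge> 0" "r\<^sup>2 \<ge> 0" using a e r by auto
    ultimately show ?thesis by (simp add: algebra_simps)
  qed
  hence le: "x * (x - 12 * r) \<le> M * M" using s2 by (simp add: power2_eq_square algebra_simps)
  have g1: "x - 12 * r > M" using xg unfolding M_def by simp
  have g2: "x > M" using xg r unfolding M_def by simp
  have "M * M < x * (x - 12 * r)"
  proof (cases "M = 0")
    case True thus ?thesis using g1 g2 by simp
  next
    case False
    hence "M > 0" using M0 by simp
    thus ?thesis using g1 g2 by (intro mult_strict_mono) auto
  qed
  thus False using le by simp
qed

theorem mainTheorem9:
  "\<exists>c::real. c > 0 \<and>
    (\<forall>(S::nat set) (A::nat set) (P::nat \<Rightarrow> nat \<Rightarrow> nat pmf) (R::nat \<Rightarrow> nat \<Rightarrow> real)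
       (Rmax::real) (\<gamma>::real) (lam::real) (\<mu>::(nat \<times> nat) pmf)
       (VV::(nat \<Rightarrow> real) set) (PP::policy set) (GG::(nat \<Rightarrow> nat \<Rightarrow> real) set)
       (n::nat) (\<delta>::real).
     finite S \<and> S \<noteq> {} \<and> finite A \<and> A \<noteq> {} \<and>
     (\<forall>s\<in>S. \<forall>a\<in>A. set_pmf (P s a) \<subseteq> S) \<and>
     (\<forall>s\<in>S. \<forall>a\<in>A. 0 \<le> R s a \<and> R s a \<le> Rmax) \<and>
     0 \<le> \<gamma> \<and> \<gamma> < 1 \<and> lam > 0 \<and>
     set_pmf \<mu> \<subseteq> S \<times> A \<and>
     finite VV \<and> VV \<noteq> {} \<and> finite PP \<and> PP \<noteq> {} \<and> finite GG \<and> GG \<noteq> {} \<and>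
     (\<forall>V\<in>VV. \<forall>s\<in>S. 0 \<le> V s \<and> V s \<le> Vlmax \<gamma> Rmax lam A) \<and>
     (\<forall>\<pi>\<in>PP. \<forall>s\<in>S. set_pmf (\<pi> s) \<subseteq> A \<and>
        (\<forall>a\<in>A. pmf (\<pi> s) a > 0 \<and> \<bar>ln (pmf (\<pi> s) a)\<bar> \<le> Vlmax \<gamma> Rmax lam A / lam)) \<and>
     (\<forall>g\<in>GG. \<forall>s\<in>S. \<forall>a\<in>A. 0 \<le> g s a \<and> g s a \<le> 2 * Vlmax \<gamma> Rmax lam A) \<and>
     n > 0 \<and> 0 < \<delta> \<and> \<delta> < 1
     \<longrightarrow>
     (let Vm = Vlmax \<gamma> Rmax lam A;
          iota = Vm\<^sup>2 * ln (real (card VV) * real (card PP) * real (card GG) / \<delta>);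
          jmath = Vm\<^sup>2 * ln (real (card VV) * real (card PP) / \<delta>);
          eVP = eps_VP R P \<gamma> lam \<mu> VV PP;
          eGVP = eps_GVP R P \<gamma> lam \<mu> GG VV PP
      in measure_pmf.prob (datasetPmf n \<mu> P)
           {D. \<forall>(Vh, \<pi>h) \<in> sbeedOutputs R \<gamma> lam n D VV PP GG.
                 norm2mu \<mu> (\<lambda>s a. Vh s - softBellman R P \<gamma> lam \<pi>h Vh s a)
                 \<le> c * (sqrt (jmath / real n) + sqrt eVP + root 4 (jmath / real n * eVP)
                        + sqrt eGVP + root 4 (iota / real n * eGVP) + sqrt (iota / real n))}
         \<ge> 1 - 4 * \<delta>))"
proof -
  have main: "measure_pmf.prob (datasetPmf n \<mu> P)
           {D. \<forall>(Vh, \<pi>h) \<in> sbeedOutputs R \<gamma> lam n D VV PP GG.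
                 norm2mu \<mu> (\<lambda>s a. Vh s - softBellman R P \<gamma> lam \<pi>h Vh s a)
                 \<le> 22 * (sqrt ((Vlmax \<gamma> Rmax lam A)\<^sup>2 * ln (real (card VV) * real (card PP) / \<delta>) / real n)
                        + sqrt (eps_VP R P \<gamma> lam \<mu> VV PP)
                        + root 4 ((Vlmax \<gamma> Rmax lam A)\<^sup>2 * ln (real (card VV) * real (card PP) / \<delta>) / real n * eps_VP R P \<gamma> lam \<mu> VV PP)
                        + sqrt (eps_GVP R P \<gamma> lam \<mu> GG VV PP)
                        + root 4 ((Vlmax \<gamma> Rmax lam A)\<^sup>2 * ln (real (card VV) * real (card PP) * real (card GG) / \<delta>) / real n * eps_GVP R P \<gamma> lam \<mu> GG VV PP)
                        + sqrt ((Vlmax \<gamma> Rmax lam A)\<^sup>2 * ln (real (card VV) * real (card PP) * real (card GG) / \<delta>) / real n))}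
         \<ge> 1 - 4 * \<delta>"
    if H: "finite S \<and> S \<noteq> {} \<and> finite A \<and> A \<noteq> {} \<and>
     (\<forall>s\<in>S. \<forall>a\<in>A. set_pmf (P s a) \<subseteq> S) \<and>
     (\<forall>s\<in>S. \<forall>a\<in>A. 0 \<le> R s a \<and> R s a \<le> Rmax) \<and>
     0 \<le> \<gamma> \<and> \<gamma> < 1 \<and> lam > 0 \<and>
     set_pmf \<mu> \<subseteq> S \<times> A \<and>
     finite VV \<and> VV \<noteq> {} \<and> finite PP \<and> PP \<noteq> {} \<and> finite GG \<and> GG \<noteq> {} \<and>
     (\<forall>V\<in>VV. \<forall>s\<in>S. 0 \<le> V s \<and> V s \<le> Vlmax \<gamma> Rmax lam A) \<and>
     (\<forall>\<pi>\<in>PP. \<forall>s\<in>S. set_pmf (\<pi> s) \<subseteq> A \<and>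
        (\<forall>a\<in>A. pmf (\<pi> s) a > 0 \<and> \<bar>ln (pmf (\<pi> s) a)\<bar> \<le> Vlmax \<gamma> Rmax lam A / lam)) \<and>
     (\<forall>g\<in>GG. \<forall>s\<in>S. \<forall>a\<in>A. 0 \<le> g s a \<and> g s a \<le> 2 * Vlmax \<gamma> Rmax lam A) \<and>
     n > 0 \<and> 0 < \<delta> \<and> \<delta> < 1"
    for S A P R Rmax \<gamma> lam \<mu> VV PP GG n \<delta>
  proof -
    interpret sbeed_setting S A P R Rmax \<gamma> lam \<mu> VV PP GG
      using H by unfold_locales auto
    have n: "n > 0" and d0: "0 < \<delta>" and d1: "\<delta> < 1" using H by auto
    have nr: "real n > 0" using n by simp
    define N where "N = real (card VV) * real (card PP) * real (card GG)"
    have cV: "card VV \<ge> 1" using finV Vne by (simp add: Suc_le_eq card_gt_0_iff)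
    have cP: "card PP \<ge> 1" using finP Pne by (simp add: Suc_le_eq card_gt_0_iff)
    have cG: "card GG \<ge> 1" using finG Gne by (simp add: Suc_le_eq card_gt_0_iff)
    have N1: "N \<ge> 1" unfolding N_def using cV cP cG
      by (metis mult_ge1_I of_nat_1 of_nat_mono)
    define u where "u = ln (N / \<delta>)"
    have Nd: "N / \<delta> > 1" using N1 d0 d1 by (simp add: less_divide_eq_1_pos)
    have u: "u > 0" unfolding u_def using Nd by simp
    have expu: "exp (- u) = \<delta> / N" unfolding u_def using Nd d0 N1
      by (simp add: exp_minus exp_ln)
    have NP1: "real (card VV) * real (card PP) \<ge> 1" using cV cP
      by (metis mult_ge1_I of_nat_1 of_nat_mono)
    have jpos: "ln (real (card VV) * real (card PP) / \<delta>) > 0"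
    proof -
      have "real (card VV) * real (card PP) / \<delta> > 1" using NP1 d0 d1 by (simp add: less_divide_eq_1_pos)
      thus ?thesis by simp
    qed
    define w where "w = sqrt (u / real n)"
    define \<rho> where "\<rho> = Vm * w"
    have w0: "w \<ge> 0" unfolding w_def using u nr by simp
    have \<rho>0: "\<rho> \<ge> 0" unfolding \<rho>_def using w0 Vm_nn by simp
    have w2: "w\<^sup>2 = u / real n" unfolding w_def using u nr by simp
    define mm where "mm V \<pi> g = measure_pmf.expectation q (hh V \<pi> g)" for V \<pi> g
    define nA where "nA V \<pi> = norm2mu \<mu> (\<lambda>s a. V s - CC V \<pi> s a)" for V \<pi>
    define nG where "nG V \<pi> g = norm2mu \<mu> (\<lambda>s a. g s a - CC V \<pi> s a)" for V \<pi> g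
    define \<epsilon> where "\<epsilon> V \<pi> g = 2 * (6 * Vm * (nA V \<pi> + nG V \<pi> g)) * sqrt (u / real n) + 2 * (8 * Vm\<^sup>2) * u / real n" for V \<pi> g
    have eps_eq: "\<epsilon> V \<pi> g = 12 * \<rho> * (nA V \<pi> + nG V \<pi> g) + 16 * \<rho>\<^sup>2" for V \<pi> g
      unfolding \<epsilon>_def \<rho>_def w_def[symmetric] using w2 by (simp add: power_mult_distrib algebra_simps)
    define T where "T = (VV \<times> PP \<times> GG) \<times> {1, -1::real}"
    define B where "B y = (case y of ((V, \<pi>, g), c) \<Rightarrow>
        {D. (\<Sum>i<n. c * hh V \<pi> g (D i)) - real n * (c * mm V \<pi> g) > real n * \<epsilon> V \<pi> g})" for y
    define Bad where "Bad = (\<Union>y\<in>T. B y)"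
    let ?Q = "datasetPmf n \<mu> P"
    have Qeq: "?Q = Pi_pmf {..<n} (0, 0, 0) (\<lambda>_. q)" unfolding datasetPmf_def by simp
    have finT: "finite T" unfolding T_def using finV finP finG by simp
    have cardT: "real (card T) = 2 * N"
    proof -
      have "card {1, -1::real} = 2" by simp
      thus ?thesis unfolding T_def N_def using finV finP finG by (simp add: card_cartesian_product)
    qed
    have PB: "measure_pmf.prob ?Q (B y) \<le> exp (- u)" if y: "y \<in> T" for y
    proof -
      obtain V \<pi> g c where yy: "y = ((V, \<pi>, g), c)" and V: "V \<in> VV" and pi: "\<pi> \<in> PP" and g: "g \<in> GG"
        and c: "c \<in> {1, -1}" using y unfolding T_def by auto
      have ca: "\<bar>c\<bar> = 1" using c by auto
      show ?thesis unfolding yy B_def Qeq \<epsilon>_def mm_def nA_def nG_def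
        using dev[OF V pi g ca u n, of "(0, 0, 0)"] by simp
    qed
    have PBad: "measure_pmf.prob ?Q Bad \<le> 2 * \<delta>"
    proof -
      have "measure_pmf.prob ?Q Bad \<le> (\<Sum>y\<in>T. measure_pmf.prob ?Q (B y))"
        unfolding Bad_def by (rule measure_pmf.finite_measure_subadditive_finite[OF finT]) auto
      also have "\<dots> \<le> (\<Sum>y\<in>T. exp (- u))" by (intro sum_mono PB)
      also have "\<dots> = 2 * N * (\<delta> / N)" using cardT expu by simp
      also have "\<dots> = 2 * \<delta>" using N1 by simp
      finally show ?thesis .
    qed
    have good: "D \<in> {D. \<forall>(Vh, \<pi>h) \<in> sbeedOutputs R \<gamma> lam n D VV PP GG.
                 norm2mu \<mu> (\<lambda>s a. Vh s - softBellman R P \<gamma> lam \<pi>h Vh s a)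
                 \<le> 22 * (sqrt ((Vlmax \<gamma> Rmax lam A)\<^sup>2 * ln (real (card VV) * real (card PP) / \<delta>) / real n)
                        + sqrt (eps_VP R P \<gamma> lam \<mu> VV PP)
                        + root 4 ((Vlmax \<gamma> Rmax lam A)\<^sup>2 * ln (real (card VV) * real (card PP) / \<delta>) / real n * eps_VP R P \<gamma> lam \<mu> VV PP)
                        + sqrt (eps_GVP R P \<gamma> lam \<mu> GG VV PP)
                        + root 4 ((Vlmax \<gamma> Rmax lam A)\<^sup>2 * ln (real (card VV) * real (card PP) * real (card GG) / \<delta>) / real n * eps_GVP R P \<gamma> lam \<mu> GG VV PP)
                        + sqrt ((Vlmax \<gamma> Rmax lam A)\<^sup>2 * ln (real (card VV) * real (card PP) * real (card GG) / \<delta>) / real n))}"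
      if D: "D \<notin> Bad" for D
    proof -
      have dv: "\<bar>(lossL R \<gamma> lam n D V \<pi> - lossR R \<gamma> lam n D g V \<pi>) - mm V \<pi> g\<bar> \<le> \<epsilon> V \<pi> g"
        if V: "V \<in> VV" and pi: "\<pi> \<in> PP" and g: "g \<in> GG" for V \<pi> g
      proof -
        have "((V, \<pi>, g), 1) \<in> T" "((V, \<pi>, g), -1) \<in> T" unfolding T_def using V pi g by auto
        hence "D \<notin> B ((V, \<pi>, g), 1)" "D \<notin> B ((V, \<pi>, g), -1)" using D unfolding Bad_def by auto
        hence k1: "(\<Sum>i<n. hh V \<pi> g (D i)) - real n * mm V \<pi> g \<le> real n * \<epsilon> V \<pi> g"
          and k2: "- (\<Sum>i<n. hh V \<pi> g (D i)) + real n * mm V \<pi> g \<le> real n * \<epsilon> V \<pi> g"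
          unfolding B_def by (auto simp: sum_negf)
        have "(lossL R \<gamma> lam n D V \<pi> - lossR R \<gamma> lam n D g V \<pi>) - mm V \<pi> g
            = ((\<Sum>i<n. hh V \<pi> g (D i)) - real n * mm V \<pi> g) / real n"
          unfolding emp_eq using nr by (simp add: field_simps)
        moreover have "((\<Sum>i<n. hh V \<pi> g (D i)) - real n * mm V \<pi> g) / real n \<le> \<epsilon> V \<pi> g"
          using k1 nr by (simp add: pos_divide_le_eq mult.commute)
        moreover have "- (((\<Sum>i<n. hh V \<pi> g (D i)) - real n * mm V \<pi> g) / real n) \<le> \<epsilon> V \<pi> g"
        proof -
          have "- (((\<Sum>i<n. hh V \<pi> g (D i)) - real n * mm V \<pi> g) / real n)
              = (real n * mm V \<pi> g - (\<Sum>i<n. hh V \<pi> g (D i))) / real n"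
            by (simp add: minus_divide_left)
          also have "\<dots> \<le> \<epsilon> V \<pi> g" using k2 nr by (simp add: pos_divide_le_eq mult.commute)
          finally show ?thesis .
        qed
        ultimately show ?thesis by linarith
      qed
      show ?thesis unfolding mem_Collect_eq
      proof (intro ballI)
        fix x assume x: "x \<in> sbeedOutputs R \<gamma> lam n D VV PP GG"
        obtain Vh \<pi>h where xx: "x = (Vh, \<pi>h)" by fastforce
        have Vh: "Vh \<in> VV" and pih: "\<pi>h \<in> PP"
          and opt: "\<forall>V'\<in>VV. \<forall>\<pi>'\<in>PP. sbeedObj R \<gamma> lam n D GG Vh \<pi>h \<le> sbeedObj R \<gamma> lam n D GG V' \<pi>'"
          using x unfolding xx sbeedOutputs_def by auto
        have "eps_VP R P \<gamma> lam \<mu> VV PP \<in> (\<lambda>(V, \<pi>). (norm2mu \<mu> (\<lambda>s a. V s - CC V \<pi> s a))\<^sup>2) ` (VV \<times> PP)"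
          unfolding eps_VP_def by (rule Min_in) (use finV finP Vne Pne in auto)
        then obtain Vs \<pi>s where Vs: "Vs \<in> VV" and pis: "\<pi>s \<in> PP"
          and eVP: "eps_VP R P \<gamma> lam \<mu> VV PP = (nA Vs \<pi>s)\<^sup>2" unfolding nA_def by auto
        define Mg where "Mg = Min ((\<lambda>g. (norm2mu \<mu> (\<lambda>s a. g s a - CC Vh \<pi>h s a))\<^sup>2) ` GG)"
        have "Mg \<in> (\<lambda>(V, \<pi>). Min ((\<lambda>g. (norm2mu \<mu> (\<lambda>s a. g s a - CC V \<pi> s a))\<^sup>2) ` GG)) ` (VV \<times> PP)"
          unfolding Mg_def by (rule image_eqI[where x="(Vh, \<pi>h)"]) (use Vh pih in auto)
        hence MgG: "Mg \<le> eps_GVP R P \<gamma> lam \<mu> GG VV PP"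
          unfolding eps_GVP_def by (intro Max_ge) (use finV finP in auto)
        have "Mg \<in> (\<lambda>g. (norm2mu \<mu> (\<lambda>s a. g s a - CC Vh \<pi>h s a))\<^sup>2) ` GG"
          unfolding Mg_def by (rule Min_in) (use finG Gne in auto)
        then obtain gh where gh: "gh \<in> GG" and Mgeq: "Mg = (nG Vh \<pi>h gh)\<^sup>2" unfolding nG_def by auto
        have "sbeedObj R \<gamma> lam n D GG Vs \<pi>s \<in> (\<lambda>g. lossL R \<gamma> lam n D Vs \<pi>s - lossR R \<gamma> lam n D g Vs \<pi>s) ` GG"
          unfolding sbeedObj_def by (rule Max_in) (use finG Gne in auto)
        then obtain g' where g': "g' \<in> GG"
          and O2: "sbeedObj R \<gamma> lam n D GG Vs \<pi>s = lossL R \<gamma> lam n D Vs \<pi>s - lossR R \<gamma> lam n D g' Vs \<pi>s" by auto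
        have O1: "sbeedObj R \<gamma> lam n D GG Vh \<pi>h \<ge> lossL R \<gamma> lam n D Vh \<pi>h - lossR R \<gamma> lam n D gh Vh \<pi>h"
          unfolding sbeedObj_def by (rule Max_ge) (use finG gh in auto)
        have h1: "sbeedObj R \<gamma> lam n D GG Vh \<pi>h \<ge> (nA Vh \<pi>h)\<^sup>2 - (nG Vh \<pi>h gh)\<^sup>2
              - (12 * \<rho> * (nA Vh \<pi>h + nG Vh \<pi>h gh) + 16 * \<rho>\<^sup>2)"
          using O1 dv[OF Vh pih gh] m_eq[OF Vh pih gh] unfolding eps_eq mm_def nA_def nG_def by linarith
        have h2: "sbeedObj R \<gamma> lam n D GG Vs \<pi>s \<le> (nA Vs \<pi>s)\<^sup>2 - (nG Vs \<pi>s g')\<^sup>2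
              + (12 * \<rho> * (nA Vs \<pi>s + nG Vs \<pi>s g') + 16 * \<rho>\<^sup>2)"
          using O2 dv[OF Vs pis g'] m_eq[OF Vs pis g'] unfolding eps_eq mm_def nA_def nG_def by linarith
        have h3: "sbeedObj R \<gamma> lam n D GG Vh \<pi>h \<le> sbeedObj R \<gamma> lam n D GG Vs \<pi>s" using opt Vs pis by auto
        have key: "nA Vh \<pi>h \<le> 21 * \<rho> + nA Vs \<pi>s + nG Vh \<pi>h gh"
          by (rule final_alg[OF _ _ _ _ \<rho>0 h1 h2 h3]) (simp_all add: nA_def nG_def norm_nn)
        have aeq: "sqrt (eps_VP R P \<gamma> lam \<mu> VV PP) = nA Vs \<pi>s"
          unfolding eVP using norm_nn by (simp add: nA_def)
        have ele: "nG Vh \<pi>h gh \<le> sqrt (eps_GVP R P \<gamma> lam \<mu> GG VV PP)"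
        proof -
          have "nG Vh \<pi>h gh = sqrt ((nG Vh \<pi>h gh)\<^sup>2)" using norm_nn by (simp add: nG_def)
          also have "\<dots> \<le> sqrt (eps_GVP R P \<gamma> lam \<mu> GG VV PP)"
            by (rule real_sqrt_le_mono) (use MgG Mgeq in simp)
          finally show ?thesis .
        qed
        have eG0: "eps_GVP R P \<gamma> lam \<mu> GG VV PP \<ge> 0" using MgG Mgeq by (metis order.trans zero_le_power2)
        have eV0: "eps_VP R P \<gamma> lam \<mu> VV PP \<ge> 0" using eVP by simp
        have rho_eq: "sqrt ((Vlmax \<gamma> Rmax lam A)\<^sup>2 * ln (real (card VV) * real (card PP) * real (card GG) / \<delta>) / real n) = \<rho>"
        proof -
          have ueq: "ln (real (card VV) * real (card PP) * real (card GG) / \<delta>) = u" unfolding u_def N_def by simp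
          have "(Vlmax \<gamma> Rmax lam A)\<^sup>2 * u / real n = Vm\<^sup>2 * (u / real n)" by simp
          hence "sqrt ((Vlmax \<gamma> Rmax lam A)\<^sup>2 * u / real n) = sqrt (Vm\<^sup>2) * sqrt (u / real n)"
            by (simp only: real_sqrt_mult)
          also have "sqrt (Vm\<^sup>2) = Vm" using Vm_nn by simp
          finally show ?thesis unfolding ueq \<rho>_def w_def .
        qed
        have J0: "(Vlmax \<gamma> Rmax lam A)\<^sup>2 * ln (real (card VV) * real (card PP) / \<delta>) / real n \<ge> 0"
          using jpos nr by simp
        have I0: "(Vlmax \<gamma> Rmax lam A)\<^sup>2 * ln (real (card VV) * real (card PP) * real (card GG) / \<delta>) / real n \<ge> 0"
          using u nr unfolding u_def N_def by simp
        have z1: "sqrt ((Vlmax \<gamma> Rmax lam A)\<^sup>2 * ln (real (card VV) * real (card PP) / \<delta>) / real n) \<ge> 0"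
          using J0 by simp
        have z2: "root 4 ((Vlmax \<gamma> Rmax lam A)\<^sup>2 * ln (real (card VV) * real (card PP) / \<delta>) / real n * eps_VP R P \<gamma> lam \<mu> VV PP) \<ge> 0"
          using J0 eV0 by (intro real_root_ge_zero mult_nonneg_nonneg)
        have z3: "root 4 ((Vlmax \<gamma> Rmax lam A)\<^sup>2 * ln (real (card VV) * real (card PP) * real (card GG) / \<delta>) / real n * eps_GVP R P \<gamma> lam \<mu> GG VV PP) \<ge> 0"
          using I0 eG0 by (intro real_root_ge_zero mult_nonneg_nonneg)
        have z4: "sqrt (eps_VP R P \<gamma> lam \<mu> VV PP) \<ge> 0" "sqrt (eps_GVP R P \<gamma> lam \<mu> GG VV PP) \<ge> 0"
          using eV0 eG0 by simp_all
        show "case x of (Vh, \<pi>h) \<Rightarrow>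
                 norm2mu \<mu> (\<lambda>s a. Vh s - softBellman R P \<gamma> lam \<pi>h Vh s a)
                 \<le> 22 * (sqrt ((Vlmax \<gamma> Rmax lam A)\<^sup>2 * ln (real (card VV) * real (card PP) / \<delta>) / real n)
                        + sqrt (eps_VP R P \<gamma> lam \<mu> VV PP)
                        + root 4 ((Vlmax \<gamma> Rmax lam A)\<^sup>2 * ln (real (card VV) * real (card PP) / \<delta>) / real n * eps_VP R P \<gamma> lam \<mu> VV PP)
                        + sqrt (eps_GVP R P \<gamma> lam \<mu> GG VV PP)
                        + root 4 ((Vlmax \<gamma> Rmax lam A)\<^sup>2 * ln (real (card VV) * real (card PP) * real (card GG) / \<delta>) / real n * eps_GVP R P \<gamma> lam \<mu> GG VV PP)
                        + sqrt ((Vlmax \<gamma> Rmax lam A)\<^sup>2 * ln (real (card VV) * real (card PP) * real (card GG) / \<delta>) / real n))"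
          unfolding xx prod.case rho_eq distrib_left
          using key aeq ele z1 z2 z3 z4 \<rho>0 unfolding nA_def by linarith
      qed
    qed
    have "UNIV - Bad \<subseteq> {D. \<forall>(Vh, \<pi>h) \<in> sbeedOutputs R \<gamma> lam n D VV PP GG.
                 norm2mu \<mu> (\<lambda>s a. Vh s - softBellman R P \<gamma> lam \<pi>h Vh s a)
                 \<le> 22 * (sqrt ((Vlmax \<gamma> Rmax lam A)\<^sup>2 * ln (real (card VV) * real (card PP) / \<delta>) / real n)
                        + sqrt (eps_VP R P \<gamma> lam \<mu> VV PP)
                        + root 4 ((Vlmax \<gamma> Rmax lam A)\<^sup>2 * ln (real (card VV) * real (card PP) / \<delta>) / real n * eps_VP R P \<gamma> lam \<mu> VV PP)
                        + sqrt (eps_GVP R P \<gamma> lam \<mu> GG VV PP)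
                        + root 4 ((Vlmax \<gamma> Rmax lam A)\<^sup>2 * ln (real (card VV) * real (card PP) * real (card GG) / \<delta>) / real n * eps_GVP R P \<gamma> lam \<mu> GG VV PP)
                        + sqrt ((Vlmax \<gamma> Rmax lam A)\<^sup>2 * ln (real (card VV) * real (card PP) * real (card GG) / \<delta>) / real n))}"
      using good by blast
    hence "measure_pmf.prob ?Q (UNIV - Bad) \<le> measure_pmf.prob ?Q {D. \<forall>(Vh, \<pi>h) \<in> sbeedOutputs R \<gamma> lam n D VV PP GG.
                 norm2mu \<mu> (\<lambda>s a. Vh s - softBellman R P \<gamma> lam \<pi>h Vh s a)
                 \<le> 22 * (sqrt ((Vlmax \<gamma> Rmax lam A)\<^sup>2 * ln (real (card VV) * real (card PP) / \<delta>) / real n)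
                        + sqrt (eps_VP R P \<gamma> lam \<mu> VV PP)
                        + root 4 ((Vlmax \<gamma> Rmax lam A)\<^sup>2 * ln (real (card VV) * real (card PP) / \<delta>) / real n * eps_VP R P \<gamma> lam \<mu> VV PP)
                        + sqrt (eps_GVP R P \<gamma> lam \<mu> GG VV PP)
                        + root 4 ((Vlmax \<gamma> Rmax lam A)\<^sup>2 * ln (real (card VV) * real (card PP) * real (card GG) / \<delta>) / real n * eps_GVP R P \<gamma> lam \<mu> GG VV PP)
                        + sqrt ((Vlmax \<gamma> Rmax lam A)\<^sup>2 * ln (real (card VV) * real (card PP) * real (card GG) / \<delta>) / real n))}"
      by (intro measure_pmf.finite_measure_mono) auto
    moreover have "measure_pmf.prob ?Q (UNIV - Bad) = 1 - measure_pmf.prob ?Q Bad"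
      using measure_pmf.prob_compl[of Bad "?Q"] by simp
    ultimately show ?thesis using PBad d0 by linarith
  qed
  show ?thesis
    unfolding Let_def
    apply (rule exI[of _ 22])
    apply (rule conjI)
     apply simp
    apply (intro allI impI)
    apply (rule main)
    apply assumption
    done
qed

end
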